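(* Let $\alpha=\log_4(3)$. There exists a constant $C>1$ such that for all $0<r<1$, $$\frac1C\, r^{\frac{\alpha-1}{\alpha}}\le \Lambda(B(S,r),r)\le C\, r^{\frac{\alpha-1}{\alpha}}.$$
   Context: Identify $\mathbb{R}^2$ with $\mathbb{C}$. $S$ denotes the von Koch curve: the unique nonempty compact set with $S=\bigcup_{i=1}^4 f_i(S)$, where $f_1(z)=z/3$, $f_2(z)=\tfrac13+e^{i\pi/3}z/3$, $f_3(z)=\tfrac12+\tfrac{\sqrt3}{6}i+e^{-i\pi/3}z/3$, $f_4(z)=\tfrac23+z/3$. For $A\subset\mathbb{R}^2$, $B(A,r):=\{x:\mathrm{dist}(x,A)\le r\}$. A rectifiable curve is the image of a Lipschitz map $[0,1]\to\mathbb{R}^2$. $\Lambda(E,r):=\inf\{\mathcal{H}^1(\Gamma):\Gamma \text{ a rectifiable curve with } B(\Gamma,r)\supset E\}$. *)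

theory Defs
  imports "HOL-Analysis.Analysis"
begin

definition koch_map :: "nat \<Rightarrow> complex \<Rightarrow> complex" where
  "koch_map i z =
     (if i = 1 then z / 3
      else if i = 2 then 1/3 + cis (pi/3) * z / 3
      else if i = 3 then 1/2 + complex_of_real (sqrt 3 / 6) * \<i> + cis (- pi/3) * z / 3
      else 2/3 + z / 3)"

definition koch_curve :: "complex set" where
  "koch_curve = (THE K. K \<noteq> {} \<and> compact K \<and> K = (\<Union>i\<in>{1..4}. koch_map i ` K))"

definition nbhd :: "complex set \<Rightarrow> real \<Rightarrow> complex set" where
  "nbhd A r = {x. infdist x A \<le> r}"

text \<open>One-dimensional Hausdorff measure (normalised as sum of diameters of countable covers).\<close>
definition hausdorff1 :: "complex set \<Rightarrow> ennreal" where
  "hausdorff1 E = (SUP \<delta>\<in>{0<..}.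
      INF U\<in>{U :: nat \<Rightarrow> complex set. E \<subseteq> (\<Union>i. U i) \<and> (\<forall>i. bounded (U i) \<and> diameter (U i) \<le> \<delta>)}.
        (\<Sum>i. ennreal (diameter (U i))))"

definition rectifiable_curve :: "complex set \<Rightarrow> bool" where
  "rectifiable_curve \<Gamma> \<longleftrightarrow> (\<exists>g :: real \<Rightarrow> complex. \<exists>L. lipschitz_on L {0..1} g \<and> \<Gamma> = g ` {0..1})"

definition Lambda :: "complex set \<Rightarrow> real \<Rightarrow> ennreal" where
  "Lambda E r = (INF \<Gamma>\<in>{\<Gamma>. rectifiable_curve \<Gamma> \<and> E \<subseteq> nbhd \<Gamma> r}. hausdorff1 \<Gamma>)"

end

theory Submission
  imports Defs
begin

lemma cis_pi3: "cis (pi/3) = Complex (1/2) (sqrt 3/2)"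
  by (simp add: cis.ctr cos_60 sin_60)
lemma cis_mpi3: "cis (- pi/3) = Complex (1/2) (- sqrt 3/2)"
  by (simp add: cis.ctr cos_60 sin_60)

lemma km_Re: "Re (koch_map i z) =
  (if i = 1 then Re z / 3 else if i = 2 then 1/3 + (Re z/2 - sqrt 3 * Im z/2)/3
   else if i = 3 then 1/2 + (Re z/2 + sqrt 3 * Im z/2)/3 else 2/3 + Re z/3)"
  by (simp add: koch_map_def cis_pi3 cis_mpi3 cos_60 sin_60 field_simps)

lemma km_Im: "Im (koch_map i z) =
  (if i = 1 then Im z / 3 else if i = 2 then (sqrt 3 * Re z/2 + Im z/2)/3
   else if i = 3 then sqrt 3/6 + (- sqrt 3 * Re z/2 + Im z/2)/3 else Im z/3)"
  by (simp add: koch_map_def cis_pi3 cis_mpi3 cos_60 sin_60 field_simps)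

lemma km_dist: "dist (koch_map i z) (koch_map i w) = dist z w / 3"
proof -
  define c where "c = (if i = 1 then 1 else if i = 2 then cis (pi/3)
     else if i = 3 then cis (-pi/3) else (1::complex))"
  have nc: "norm c = 1" by (simp add: c_def)
  have "koch_map i z - koch_map i w = c * ((z - w) / 3)"
    by (simp add: koch_map_def c_def field_simps)
  then have "norm (koch_map i z - koch_map i w) = norm c * norm ((z - w) / 3)"
    by (simp only: norm_mult)
  then show ?thesis by (simp add: dist_norm nc norm_divide)
qed

lemma km_surj: "\<exists>x'. koch_map i x' = x"
proof -
  define c where "c = (if i = 1 then 1 else if i = 2 then cis (pi/3)
     else if i = 3 then cis (-pi/3) else 1)"
  define a where "a = (if i = 1 then 0 else if i = 2 then 1/3
     else if i = 3 then 1/2 + complex_of_real (sqrt 3 / 6) * \<i> else 2/3)"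
  have km: "koch_map i z = a + c * z / 3" for z
    by (simp add: koch_map_def a_def c_def)
  have "c \<noteq> 0" by (simp add: c_def)
  then have "koch_map i (3 * (x - a) / c) = x" by (simp add: km field_simps)
  then show ?thesis by blast
qed

lemma km_lipschitz: "lipschitz_on (1/3) S (koch_map i)"
  unfolding lipschitz_on_def by (simp add: km_dist)

lemma km_cont: "continuous_on S (koch_map i)"
  by (rule lipschitz_on_continuous_on[OF km_lipschitz])

lemma infdist_attained:
  fixes A :: "complex set"
  assumes "closed A" "A \<noteq> {}"
  obtains a where "a \<in> A" "infdist x A = dist x a"
proof -
  obtain a where a: "a \<in> A" "\<And>y. y \<in> A \<Longrightarrow> dist x a \<le> dist x y"
    using distance_attains_inf[OF assms] by blast
  have "dist x a \<le> infdist x A"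
    unfolding infdist_notempty[OF assms(2)] by (rule cINF_greatest[OF assms(2)]) (use a in auto)
  moreover have "infdist x A \<le> dist x a" by (rule infdist_le[OF a(1)])
  ultimately show ?thesis using that a(1) by force
qed

definition kinv :: "complex set \<Rightarrow> bool" where
  "kinv K \<longleftrightarrow> K \<noteq> {} \<and> compact K \<and> K = (\<Union>i\<in>{1..4}. koch_map i ` K)"

lemma kinv_sub:
  assumes "kinv K" "i \<in> {1..4}"
  shows "koch_map i ` K \<subseteq> K"
  using assms unfolding kinv_def by blast

lemma kinv_unique_sub:
  assumes K1: "kinv K1" and K2: "kinv K2"
  shows "K1 \<subseteq> K2"
proof -
  have c1: "compact K1" "K1 \<noteq> {}" and c2: "compact K2" "K2 \<noteq> {}"
    using K1 K2 by (auto simp: kinv_def)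
  have cl2: "closed K2" using c2 compact_imp_closed by blast
  obtain k where k: "k \<in> K1" "\<And>y. y \<in> K1 \<Longrightarrow> infdist y K2 \<le> infdist k K2"
    using continuous_attains_sup[OF c1, of "\<lambda>x. infdist x K2"] continuous_on_infdist[OF continuous_on_id]
    by force
  obtain i k0 where ik: "i \<in> {1..4}" "k0 \<in> K1" "k = koch_map i k0"
    using k(1) K1 unfolding kinv_def by blast
  obtain a where a: "a \<in> K2" "infdist k0 K2 = dist k0 a"
    using infdist_attained[OF cl2 c2(2)] by metis
  have "koch_map i a \<in> K2" using kinv_sub[OF K2 ik(1)] a(1) by blast
  then have "infdist k K2 \<le> dist k (koch_map i a)" by (rule infdist_le)
  also have "\<dots> = infdist k0 K2 / 3" using ik(3) a(2) by (simp add: km_dist)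
  also have "\<dots> \<le> infdist k K2 / 3" using k(2)[OF ik(2)] by simp
  finally have "infdist k K2 \<le> 0" by simp
  then have "\<And>y. y \<in> K1 \<Longrightarrow> infdist y K2 = 0"
    using k(2) infdist_nonneg by (metis order.antisym order.trans)
  then show ?thesis using in_closed_iff_infdist_zero[OF cl2 c2(2)] by blast
qed

lemma dist_half_le: "(Re w - 1/2)^2 + (Im w)^2 \<le> 1/9 \<Longrightarrow> dist w (1/2) \<le> 1/3"
proof -
  assume h: "(Re w - 1/2)^2 + (Im w)^2 \<le> 1/9"
  have "dist w (1/2) = sqrt ((Re w - 1/2)^2 + (Im w)^2)"
    by (simp add: dist_norm cmod_def)
  also have "\<dots> \<le> sqrt (1/9)" using h by (rule real_sqrt_le_mono)
  also have "sqrt (1/9) = (1/3::real)" by (simp add: real_sqrt_divide)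
  finally show ?thesis .
qed

lemma km_half: "dist (koch_map i (1/2)) (1/2) \<le> 1/3"
  apply (rule dist_half_le)
  by (simp add: km_Re km_Im power2_eq_square)

lemma km_cball: "dist (koch_map i z) (1/2) \<le> 1/3 + dist z (1/2) / 3"
proof -
  have "dist (koch_map i z) (1/2) \<le> dist (koch_map i z) (koch_map i (1/2)) + dist (koch_map i (1/2)) (1/2)"
    by (rule dist_triangle)
  then show ?thesis using km_half[of i] by (simp add: km_dist)
qed

primrec orbit :: "nat \<Rightarrow> complex set" where
  "orbit 0 = {0}"
| "orbit (Suc n) = (\<Union>i\<in>{1..4}. koch_map i ` orbit n)"

lemma orbit_mono: "orbit n \<subseteq> orbit (Suc n)"
proof (induction n)
  case 0
  have "koch_map 1 0 = 0" by (simp add: koch_map_def)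
  then show ?case by force
next
  case (Suc n)
  have "(\<Union>i\<in>{1..4}. koch_map i ` orbit n) \<subseteq> (\<Union>i\<in>{1..4}. koch_map i ` orbit (Suc n))"
    by (intro UN_mono image_mono Suc.IH order.refl)
  then show ?case by (simp only: orbit.simps(2)[of "Suc n"] orbit.simps(2)[of n])
qed

lemma orbit_ball: "orbit n \<subseteq> cball (1/2) (1/2)"
proof (induction n)
  case 0
  then show ?case by (simp add: dist_norm)
next
  case (Suc n)
  { fix i z assume "z \<in> orbit n"
    then have "dist z (1/2) \<le> 1/2" using Suc by (auto simp: dist_commute)
    then have "dist (koch_map i z) (1/2) \<le> 1/2" using km_cball[of i z] by linarith }
  then show ?case by (auto simp: dist_commute)
qed

lemma closure_image_km: "bounded A \<Longrightarrow> koch_map i ` closure A = closure (koch_map i ` A)"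
proof
  assume b: "bounded A"
  show "koch_map i ` closure A \<subseteq> closure (koch_map i ` A)"
    by (rule image_closure_subset[OF km_cont]) (simp_all add: closure_subset)
  have "compact (koch_map i ` closure A)"
    using b by (intro compact_continuous_image km_cont) (simp add: compact_closure)
  then have "closed (koch_map i ` closure A)" by (rule compact_imp_closed)
  moreover have "koch_map i ` A \<subseteq> koch_map i ` closure A" using closure_subset by blast
  ultimately show "closure (koch_map i ` A) \<subseteq> koch_map i ` closure A"
    by (rule closure_minimal[rotated])
qed

lemma kinv_exists: "\<exists>K. kinv K"
proof -
  define A where "A = (\<Union>n. orbit n)"
  have "A \<subseteq> cball (1/2) (1/2)" unfolding A_def using orbit_ball by (simp add: UN_subset_iff)
  then have bA: "bounded A" using bounded_cball bounded_subset by blast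
  have "0 \<in> orbit 0" by simp
  then have A0: "0 \<in> A" unfolding A_def by blast
  have Ainv: "(\<Union>i\<in>{1..4}. koch_map i ` A) = A"
  proof
    show "(\<Union>i\<in>{1..4}. koch_map i ` A) \<subseteq> A"
    proof
      fix x assume "x \<in> (\<Union>i\<in>{1..4}. koch_map i ` A)"
      then obtain i y where iy: "i \<in> {1..4}" "y \<in> A" "x = koch_map i y" by blast
      then obtain n where "y \<in> orbit n" unfolding A_def by blast
      then have "x \<in> koch_map i ` orbit n" using iy(3) by blast
      then have "x \<in> orbit (Suc n)" unfolding orbit.simps using iy(1) by blast
      then show "x \<in> A" unfolding A_def by blast
    qed
  next
    show "A \<subseteq> (\<Union>i\<in>{1..4}. koch_map i ` A)"
    proof
      fix x assume "x \<in> A"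
      then obtain n where "x \<in> orbit n" unfolding A_def by blast
      then have "x \<in> orbit (Suc n)" using orbit_mono by blast
      then obtain i y where "i \<in> {1..4}" "y \<in> orbit n" "x = koch_map i y"
        unfolding orbit.simps by blast
      moreover have "y \<in> A" unfolding A_def using \<open>y \<in> orbit n\<close> by blast
      ultimately show "x \<in> (\<Union>i\<in>{1..4}. koch_map i ` A)" by blast
    qed
  qed
  have "kinv (closure A)"
    unfolding kinv_def
  proof (intro conjI)
    show "closure A \<noteq> {}" using A0 closure_subset by blast
    show "compact (closure A)" using bA by (simp add: compact_closure)
    have "(\<Union>i\<in>{1..4}. koch_map i ` closure A) = (\<Union>i\<in>{1..4}. closure (koch_map i ` A))"
      using closure_image_km[OF bA] by simp
    also have "\<dots> = closure (\<Union>i\<in>{1..4}. koch_map i ` A)"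
    proof -
      have e: "{1..4::nat} = {1,2,3,4}" by auto
      show ?thesis unfolding e by simp
    qed
    finally show "closure A = (\<Union>i\<in>{1..4}. koch_map i ` closure A)" using Ainv by simp
  qed
  then show ?thesis by blast
qed

lemma koch_kinv: "kinv koch_curve"
proof -
  have "\<exists>!K. kinv K" using kinv_exists kinv_unique_sub by (meson subset_antisym)
  then have "kinv (THE K. kinv K)" by (rule theI')
  moreover have "koch_curve = (THE K. kinv K)" unfolding koch_curve_def kinv_def by simp
  ultimately show ?thesis by simp
qed


lemma koch_props: "koch_curve \<noteq> {}" "compact koch_curve"
  "koch_curve = (\<Union>i\<in>{1..4}. koch_map i ` koch_curve)"
  using koch_kinv unfolding kinv_def by auto

lemma koch_sub: "i \<in> {1..4} \<Longrightarrow> z \<in> koch_curve \<Longrightarrow> koch_map i z \<in> koch_curve"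
  using kinv_sub[OF koch_kinv] by blast

lemma fixed_in_koch:
  assumes "i \<in> {1..4}" "koch_map i p = p"
  shows "p \<in> koch_curve"
proof -
  have cl: "closed koch_curve" using koch_props compact_imp_closed by blast
  obtain k where k: "k \<in> koch_curve" "infdist p koch_curve = dist p k"
    using infdist_attained[OF cl koch_props(1)] by metis
  have "koch_map i k \<in> koch_curve" using koch_sub[OF assms(1)] k(1) by blast
  then have "infdist p koch_curve \<le> dist p (koch_map i k)" by (rule infdist_le)
  also have "\<dots> = dist p k / 3" using assms(2) km_dist[of i p k] by simp
  finally have "dist p k = 0" using k(2) by simp
  then show ?thesis using k(1) by simp
qed

lemma zero_in_koch: "0 \<in> koch_curve"
  by (rule fixed_in_koch[of 1]) (auto simp: koch_map_def)

lemma one_in_koch: "1 \<in> koch_curve"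
  by (rule fixed_in_koch[of 4]) (auto simp: koch_map_def)

definition apex :: complex where "apex = Complex (1/2) (sqrt 3 / 6)"

lemma km2_one: "koch_map 2 1 = apex"
  by (simp add: complex_eq_iff km_Re km_Im apex_def)

lemma apex_in_koch: "apex \<in> koch_curve"
  using koch_sub[of 2 1] one_in_koch km2_one by simp

lemma koch_in_cball: "koch_curve \<subseteq> cball (1/2) (1/2)"
proof -
  obtain k where k: "k \<in> koch_curve" "\<And>y. y \<in> koch_curve \<Longrightarrow> dist y (1/2) \<le> dist k (1/2)"
    using continuous_attains_sup[OF koch_props(2,1), of "\<lambda>x. dist x (1/2)"]
    by (force intro: continuous_intros)
  obtain i k0 where ik: "i \<in> {1..4}" "k0 \<in> koch_curve" "k = koch_map i k0"
    using k(1) koch_props(3) by blast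
  have "dist k (1/2) \<le> 1/3 + dist k0 (1/2) / 3" using km_cball ik(3) by simp
  also have "\<dots> \<le> 1/3 + dist k (1/2) / 3" using k(2)[OF ik(2)] by simp
  finally have "dist k (1/2) \<le> 1/2" by simp
  then show ?thesis using k(2) by (force simp: dist_commute)
qed


lemma norm_cis_diff: "norm (cis a - cis b) \<le> \<bar>a - b\<bar>"
proof -
  have "(norm (cis a - cis b))^2 = (cos a - cos b)^2 + (sin a - sin b)^2"
    by (simp add: cmod_power2 cis.ctr)
  also have "\<dots> = 2 - 2 * cos (a - b)"
    by (simp add: cos_diff power2_eq_square algebra_simps)
  also have "cos (a - b) = 1 - 2 * (sin ((a - b)/2))^2"
    using cos_double_sin[of "(a-b)/2"] by (metis mult_2 field_sum_of_halves)
  also have "2 - 2 * (1 - 2 * (sin ((a - b)/2))^2) = 4 * (sin ((a - b)/2))^2" by simp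
  also have "\<dots> \<le> 4 * ((a - b)/2)^2"
    using abs_sin_x_le_abs_x[of "(a-b)/2"] by (simp add: abs_le_square_iff[symmetric])
  also have "\<dots> = (\<bar>a - b\<bar>)^2" by (simp add: power2_eq_square)
  finally show ?thesis by (simp add: abs_le_square_iff[symmetric])
qed

primrec gp :: "nat \<Rightarrow> real \<Rightarrow> complex" where
  "gp 0 t = 1/2 - (1/2) * cis (3 * pi * t)"
| "gp (Suc n) t = (if t \<le> 1/4 then koch_map 1 (gp n (4*t))
     else if t \<le> 1/2 then koch_map 2 (gp n (4*t-1))
     else if t \<le> 3/4 then koch_map 3 (gp n (4*t-2)) else koch_map 4 (gp n (4*t-3)))"

lemma cis_3pi: "cis (3 * pi) = -1"
proof -
  have "cos (real 3 * pi) = (-1)^3" by (rule cos_npi)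
  moreover have "sin (real 3 * pi) = 0" by (rule sin_npi)
  ultimately show ?thesis by (simp add: cis.ctr complex_eq_iff)
qed

lemma gp_ends: "gp n 0 = 0 \<and> gp n 1 = 1"
proof (induction n)
  case 0
  then show ?case by (simp add: cis_3pi)
next
  case (Suc n)
  then show ?case by (simp add: koch_map_def)
qed

lemma km_ends: "koch_map 1 1 = koch_map 2 0" "koch_map 2 1 = koch_map 3 0" "koch_map 3 1 = koch_map 4 0"
  by (simp_all add: complex_eq_iff km_Re km_Im)

lemma gp_p1: "t \<le> 1/4 \<Longrightarrow> gp (Suc n) t = koch_map 1 (gp n (4*t))"
  by simp

lemma gp_p2: "1/4 \<le> t \<Longrightarrow> t \<le> 1/2 \<Longrightarrow> gp (Suc n) t = koch_map 2 (gp n (4*t-1))"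
proof -
  assume a: "1/4 \<le> t" "t \<le> 1/2"
  show ?thesis
  proof (cases "t = 1/4")
    case True
    then show ?thesis unfolding True using gp_ends[of n] km_ends by simp
  qed (use a in simp)
qed

lemma gp_p3: "1/2 \<le> t \<Longrightarrow> t \<le> 3/4 \<Longrightarrow> gp (Suc n) t = koch_map 3 (gp n (4*t-2))"
proof -
  assume a: "1/2 \<le> t" "t \<le> 3/4"
  show ?thesis
  proof (cases "t = 1/2")
    case True
    then show ?thesis unfolding True using gp_ends[of n] km_ends by simp
  qed (use a in simp)
qed

lemma gp_p4: "3/4 \<le> t \<Longrightarrow> gp (Suc n) t = koch_map 4 (gp n (4*t-3))"
proof -
  assume a: "3/4 \<le> t"
  show ?thesis
  proof (cases "t = 3/4")
    case True
    then show ?thesis unfolding True using gp_ends[of n] km_ends by simp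
  qed (use a in simp)
qed


lemma lip_glue:
  fixes f :: "real \<Rightarrow> complex"
  assumes "lipschitz_on L {a..b} f" "lipschitz_on L {b..c} f" "a \<le> b" "b \<le> c"
  shows "lipschitz_on L {a..c} f"
  unfolding lipschitz_on_def
proof (intro conjI ballI)
  show "0 \<le> L" using assms(1) by (simp add: lipschitz_on_def)
  have key: "dist (f x) (f y) \<le> L * dist x y" if xy: "x \<in> {a..c}" "y \<in> {a..c}" "x \<le> y" for x y
  proof (cases "y \<le> b")
    case True
    then show ?thesis using assms(1) xy by (auto simp: lipschitz_on_def)
  next
    case False
    show ?thesis
    proof (cases "b \<le> x")
      case True
      then show ?thesis using assms(2) xy by (auto simp: lipschitz_on_def)
    next
      case False2: False
      have "dist (f x) (f y) \<le> dist (f x) (f b) + dist (f b) (f y)" by (rule dist_triangle)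
      also have "\<dots> \<le> L * dist x b + L * dist b y"
        using assms(1,2) xy False False2 assms(3,4) unfolding lipschitz_on_def
        by (intro add_mono) auto
      also have "\<dots> = L * dist x y" using xy False False2
        by (simp add: dist_real_def algebra_simps)
      finally show ?thesis .
    qed
  qed
  fix x y assume "x \<in> {a..c}" "y \<in> {a..c}"
  then show "dist (f x) (f y) \<le> L * dist x y"
    using key[of x y] key[of y x] by (cases "x \<le> y") (auto simp: dist_commute)
qed

lemma lip_piece:
  fixes h g :: "real \<Rightarrow> complex"
  assumes "\<And>t. t \<in> {c/4..(c+1)/4} \<Longrightarrow> h t = koch_map i (g (4*t - c))"
    and "lipschitz_on L {0..1} g"
  shows "lipschitz_on (4*L/3) {c/4..(c+1)/4} h"
  unfolding lipschitz_on_def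
proof (intro conjI ballI)
  show "0 \<le> 4*L/3" using assms(2) by (simp add: lipschitz_on_def)
  fix x y assume xy: "x \<in> {c/4..(c+1)/4}" "y \<in> {c/4..(c+1)/4}"
  have m: "4*x - c \<in> {0..1}" "4*y - c \<in> {0..1}" using xy by auto
  have "dist (h x) (h y) = dist (g (4*x - c)) (g (4*y - c)) / 3"
    using assms(1) xy by (simp add: km_dist)
  also have "\<dots> \<le> L * dist (4*x - c) (4*y - c) / 3"
    using assms(2) m unfolding lipschitz_on_def by (intro divide_right_mono) auto
  also have "dist (4*x - c) (4*y - c) = 4 * dist x y"
  proof -
    have "(4*x - c) - (4*y - c) = 4*(x-y)" by simp
    then have "\<bar>(4*x - c) - (4*y - c)\<bar> = 4 * \<bar>x - y\<bar>" by (simp only: abs_mult)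
    then show ?thesis by (simp only: dist_real_def)
  qed
  also have "L * (4 * dist x y) / 3 = 4*L/3 * dist x y" by simp
  finally show "dist (h x) (h y) \<le> 4*L/3 * dist x y" .
qed

lemma gp_lip: "lipschitz_on (3*pi/2*(4/3)^n) {0..1} (gp n)"
proof (induction n)
  case 0
  show ?case unfolding lipschitz_on_def
  proof (intro conjI ballI)
    show "0 \<le> 3*pi/2*(4/3)^0" by simp
    fix x y :: real
    have e: "gp 0 x - gp 0 y = (cis (3*pi*y) - cis (3*pi*x)) / 2" by (simp add: field_simps)
    have "dist (gp 0 x) (gp 0 y) = norm (cis (3*pi*x) - cis (3*pi*y)) / 2"
      unfolding dist_norm e by (simp add: norm_divide norm_minus_commute)
    also have "\<dots> \<le> \<bar>3*pi*x - 3*pi*y\<bar> / 2" using norm_cis_diff by (intro divide_right_mono) auto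
    also have "\<dots> = 3*pi/2*(4/3)^0 * dist x y"
    proof -
      have "3*pi*x - 3*pi*y = (3*pi)*(x-y)" by (simp add: algebra_simps)
      then have "\<bar>3*pi*x - 3*pi*y\<bar> = 3*pi*\<bar>x-y\<bar>" by (simp add: abs_mult)
      then show ?thesis by (simp add: dist_real_def)
    qed
    finally show "dist (gp 0 x) (gp 0 y) \<le> 3*pi/2*(4/3)^0 * dist x y" .
  qed
next
  case (Suc n)
  define L where "L = 3*pi/2*(4/3)^n"
  have L': "3*pi/2*(4/3)^Suc n = 4*L/3" by (simp add: L_def)
  have p1: "lipschitz_on (4*L/3) {0/4..(0+1)/4} (gp (Suc n))"
    apply (rule lip_piece[where i=1 and g="gp n"])
    subgoal by (simp del: gp.simps add: gp_p1)
    subgoal using Suc.IH by (simp add: L_def)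
    done
  have p2: "lipschitz_on (4*L/3) {1/4..(1+1)/4} (gp (Suc n))"
    apply (rule lip_piece[where i=2 and g="gp n"])
    subgoal by (simp del: gp.simps add: gp_p2)
    subgoal using Suc.IH by (simp add: L_def)
    done
  have p3: "lipschitz_on (4*L/3) {2/4..(2+1)/4} (gp (Suc n))"
    apply (rule lip_piece[where i=3 and g="gp n"])
    subgoal by (simp del: gp.simps add: gp_p3)
    subgoal using Suc.IH by (simp add: L_def)
    done
  have p4: "lipschitz_on (4*L/3) {3/4..(3+1)/4} (gp (Suc n))"
    apply (rule lip_piece[where i=4 and g="gp n"])
    subgoal by (simp del: gp.simps add: gp_p4)
    subgoal using Suc.IH by (simp add: L_def)
    done
  have "lipschitz_on (4*L/3) {0..1/2} (gp (Suc n))"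
    by (rule lip_glue[of _ _ "1/4"]) (use p1 p2 in auto)
  then have "lipschitz_on (4*L/3) {0..3/4} (gp (Suc n))"
    by (rule lip_glue[of _ _ "1/2"]) (use p3 in auto)
  then have "lipschitz_on (4*L/3) {0..1} (gp (Suc n))"
    by (rule lip_glue[of _ _ "3/4"]) (use p4 in auto)
  then show ?case by (simp only: L')
qed


lemma gp_base:
  assumes "s \<in> koch_curve" "1 \<le> \<rho>" "dist x s \<le> \<rho>"
  shows "\<exists>t\<in>{0..1}. dist x (gp 0 t) \<le> \<rho>"
proof -
  have s: "dist s (1/2) \<le> 1/2" using assms(1) koch_in_cball by (auto simp: dist_commute)
  show ?thesis
  proof (cases "dist x (1/2) \<le> 1/2")
    case True
    have "dist x (gp 0 0) = dist x 0" by simp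
    also have "\<dots> \<le> dist x (1/2) + dist (1/2) (0::complex)" by (rule dist_triangle)
    also have "\<dots> \<le> \<rho>" using True assms(2) by (simp add: dist_norm)
    finally show ?thesis by (intro bexI[of _ 0]) auto
  next
    case False
    define d where "d = norm (x - 1/2)"
    have d: "d > 1/2" using False by (simp add: d_def dist_norm)
    define u where "u = (x - 1/2) / d"
    have "x - 1/2 \<noteq> 0"
    proof
      assume "x - 1/2 = 0"
      then have "d = 0" unfolding d_def by (simp only: norm_zero)
      with d show False by simp
    qed
    then have xu: "x = 1/2 + d * u" using d by (simp add: u_def)
    have nu: "norm u = 1" using d by (simp add: u_def norm_divide flip: d_def)
    then have "(Re (-u))^2 + (Im (-u))^2 = 1" by (simp add: cmod_def)
    then obtain \<theta> where th: "0 \<le> \<theta>" "\<theta> < 2*pi" "Re (-u) = cos \<theta>" "Im (-u) = sin \<theta>"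
      using sincos_total_2pi by metis
    define t where "t = \<theta> / (3*pi)"
    have t01: "t \<in> {0..1}" using th by (auto simp: t_def field_simps)
    have "cis (3*pi*t) = - u" using th by (simp add: t_def cis.ctr complex_eq_iff)
    then have g: "gp 0 t = 1/2 + u/2" by simp
    have "x - gp 0 t = complex_of_real (d - 1/2) * u" by (simp add: g xu algebra_simps del: gp.simps)
    then have "dist x (gp 0 t) = norm (complex_of_real (d-1/2)) * norm u" by (simp only: dist_norm norm_mult)
    also have "\<dots> = d - 1/2" using d nu by (simp only: norm_of_real) simp
    also have "d \<le> dist x s + dist s (1/2)" unfolding d_def dist_norm[symmetric] by (rule dist_triangle)
    finally have "dist x (gp 0 t) \<le> \<rho>" using s assms(3) by linarith
    then show ?thesis using t01 by blast
  qed
qed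

lemma gp_cover:
  "s \<in> koch_curve \<Longrightarrow> (1/3)^n \<le> \<rho> \<Longrightarrow> dist x s \<le> \<rho> \<Longrightarrow> \<exists>t\<in>{0..1}. dist x (gp n t) \<le> \<rho>"
proof (induction n arbitrary: s x \<rho>)
  case 0
  then show ?case using gp_base by simp
next
  case (Suc n)
  obtain i s' where is': "i \<in> {1..4}" "s' \<in> koch_curve" "s = koch_map i s'"
    using Suc.prems(1) koch_props(3) by blast
  obtain x' where x': "koch_map i x' = x" using km_surj by blast
  have "dist x' s' = 3 * dist x s" using km_dist[of i x' s'] x' is'(3) by simp
  then have d': "dist x' s' \<le> 3 * \<rho>" using Suc.prems(3) by simp
  have r': "(1/3)^n \<le> 3 * \<rho>" using Suc.prems(2) by simp
  obtain t' where t': "t' \<in> {0..1}" "dist x' (gp n t') \<le> 3 * \<rho>"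
    using Suc.IH[OF is'(2) r' d'] by blast
  have dd: "dist x (koch_map i (gp n t')) \<le> \<rho>"
    using km_dist[of i x' "gp n t'"] x' t'(2) by simp
  have "\<exists>t\<in>{0..1}. gp (Suc n) t = koch_map i (gp n t')"
  proof -
    have "i = 1 \<or> i = 2 \<or> i = 3 \<or> i = 4" using is'(1) by auto
    then show ?thesis
    proof (elim disjE)
      assume "i = 1"
      then show ?thesis using t' gp_p1[of "t'/4" n] by (intro bexI[of _ "t'/4"]) auto
    next
      assume "i = 2"
      moreover have c: "1/4 \<le> (t'+1)/4" "(t'+1)/4 \<le> 1/2" using t' by auto
      moreover have e: "4*((t'+1)/4) - 1 = t'" by (simp add: field_simps)
      moreover have "(t'+1)/4 \<in> {0..1}" using t' by auto
      ultimately show ?thesis using gp_p2[OF c, of n, unfolded e] by blast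
    next
      assume "i = 3"
      moreover have c: "1/2 \<le> (t'+2)/4" "(t'+2)/4 \<le> 3/4" using t' by auto
      moreover have e: "4*((t'+2)/4) - 2 = t'" by (simp add: field_simps)
      moreover have "(t'+2)/4 \<in> {0..1}" using t' by auto
      ultimately show ?thesis using gp_p3[OF c, of n, unfolded e] by blast
    next
      assume "i = 4"
      moreover have c: "3/4 \<le> (t'+3)/4"  using t' by auto
      moreover have e: "4*((t'+3)/4) - 3 = t'" by (simp add: field_simps)
      moreover have "(t'+3)/4 \<in> {0..1}" using t' by auto
      ultimately show ?thesis using gp_p4[OF c, of n, unfolded e] by blast
    qed
  qed
  then show ?case using dd by metis
qed


lemma unit_interval_cover:
  fixes t :: real and m :: nat
  assumes "m \<ge> 1" "t \<in> {0..1}"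
  shows "\<exists>k<m. t \<in> {real k / m .. (real k + 1) / m}"
proof (cases "t = 1")
  case True
  then show ?thesis using assms(1) by (intro exI[of _ "m - 1"]) (auto simp: of_nat_diff field_simps)
next
  case False
  define k where "k = nat \<lfloor>t * m\<rfloor>"
  have tm: "0 \<le> t * m" "t * m < m" using assms False by auto
  have k1: "real k \<le> t * m" using tm by (simp add: k_def)
  have k2: "t * m < real k + 1" using tm by (simp add: k_def)
  have "k < m" using k1 tm by linarith
  moreover have "t \<in> {real k / m .. (real k + 1) / m}"
    using k1 k2 assms(1) by (auto simp: field_simps)
  ultimately show ?thesis by blast
qed

lemma hausdorff1_lip:
  fixes g :: "real \<Rightarrow> complex"
  assumes lip: "lipschitz_on L {0..1} g"
  shows "hausdorff1 (g ` {0..1}) \<le> ennreal L"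
  unfolding hausdorff1_def
proof (rule SUP_least)
  fix \<delta> :: real assume "\<delta> \<in> {0<..}"
  then have dp: "\<delta> > 0" by simp
  have L0: "0 \<le> L" using lip by (simp add: lipschitz_on_def)
  define m :: nat where "m = nat \<lceil>L / \<delta>\<rceil> + 1"
  have m1: "m \<ge> 1" by (simp add: m_def)
  have "L / \<delta> \<le> real m" unfolding m_def by linarith
  then have Lm: "L / m \<le> \<delta>" using dp m1 by (simp add: field_simps)
  define U where "U k = (if k < m then g ` {real k / m .. (real k + 1) / m} else {})" for k
  have sub: "{real k / m .. (real k + 1) / m} \<subseteq> {0..1}" if "k < m" for k
    using that m1 by (auto simp: field_simps)
  have cont: "continuous_on {0..1} g" using lipschitz_on_continuous_on[OF lip] .
  have bU: "bounded (U k)" for k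
  proof (cases "k < m")
    case True
    have "compact (g ` {real k / m .. (real k + 1) / m})"
      by (rule compact_continuous_image[OF continuous_on_subset[OF cont sub[OF True]]]) simp
    then show ?thesis using True by (simp add: U_def compact_imp_bounded)
  qed (simp add: U_def)
  have dU: "diameter (U k) \<le> L / m" for k
  proof (cases "k < m")
    case True
    define I where "I = {real k / m .. (real k + 1) / m}"
    have UI: "U k = g ` I" using True by (simp add: U_def I_def)
    have "diameter (g ` I) \<le> L / m"
    proof (rule diameter_le)
      show "g ` I \<noteq> {} \<or> 0 \<le> L / real m" using L0 by simp
      fix x y assume "x \<in> g ` I" "y \<in> g ` I"
      then obtain a b where ab: "a \<in> I" "b \<in> I" "x = g a" "y = g b" by blast
      have "a \<in> {0..1}" "b \<in> {0..1}" using sub[OF True] ab(1,2) unfolding I_def by blast+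
      then have dg: "dist (g a) (g b) \<le> L * dist a b" using lip by (simp add: lipschitz_on_def)
      have h: "(real k + 1)/m - real k / m = 1/m" by (simp add: diff_divide_distrib[symmetric])
      have "dist a b \<le> 1 / m" using ab(1,2) h unfolding I_def dist_real_def by auto
      then have "L * dist a b \<le> L * (1 / m)" using L0 by (intro mult_left_mono)
      then show "norm (x - y) \<le> L / m" using ab dg by (simp add: dist_norm)
    qed
    then show ?thesis using UI by simp
  qed (use L0 in \<open>simp add: U_def\<close>)
  have cov: "g ` {0..1} \<subseteq> (\<Union>k. U k)"
  proof
    fix x assume "x \<in> g ` {0..1}"
    then obtain t where t: "t \<in> {0..1}" "x = g t" by blast
    obtain k where "k < m" "t \<in> {real k / m .. (real k + 1) / m}"
      using unit_interval_cover[OF m1 t(1)] by blast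
    then show "x \<in> (\<Union>k. U k)" using t by (auto simp: U_def)
  qed
  have "(\<Sum>k. ennreal (diameter (U k))) = (\<Sum>k<m. ennreal (diameter (U k)))"
    by (rule suminf_finite) (auto simp: U_def)
  also have "\<dots> \<le> (\<Sum>k<m. ennreal (L / m))"
    by (intro sum_mono ennreal_leI dU)
  also have "\<dots> = ennreal (real m) * ennreal (L / m)" by (simp add: ennreal_of_nat_eq_real_of_nat)
  also have "\<dots> = ennreal (real m * (L / m))" by (rule ennreal_mult[symmetric]) (use L0 in auto)
  also have "\<dots> = ennreal L" using m1 by simp
  finally have S: "(\<Sum>k. ennreal (diameter (U k))) \<le> ennreal L" .
  have "U \<in> {U. g ` {0..1} \<subseteq> (\<Union>i. U i) \<and> (\<forall>i. bounded (U i) \<and> diameter (U i) \<le> \<delta>)}"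
    using cov bU order.trans[OF dU Lm] by blast
  then show "(INF U\<in>{U. g ` {0..1} \<subseteq> (\<Union>i. U i) \<and> (\<forall>i. bounded (U i) \<and> diameter (U i) \<le> \<delta>)}.
             \<Sum>i. ennreal (diameter (U i))) \<le> ennreal L"
    using S by (meson INF_lower2)
qed


lemma koch_closed: "closed koch_curve"
  using koch_props compact_imp_closed by blast

lemma Lambda_upper_n:
  assumes "(1/3)^n \<le> r"
  shows "Lambda (nbhd koch_curve r) r \<le> ennreal (3*pi/2*(4/3)^n)"
proof -
  define \<Gamma> where "\<Gamma> = gp n ` {0..1}"
  have rc: "rectifiable_curve \<Gamma>" unfolding rectifiable_curve_def \<Gamma>_def using gp_lip by blast
  have nb: "nbhd koch_curve r \<subseteq> nbhd \<Gamma> r"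
  proof
    fix x assume "x \<in> nbhd koch_curve r"
    then have xr: "infdist x koch_curve \<le> r" by (simp add: nbhd_def)
    obtain s where s: "s \<in> koch_curve" "infdist x koch_curve = dist x s"
      using infdist_attained[OF koch_closed koch_props(1)] by metis
    obtain t where t: "t \<in> {0..1}" "dist x (gp n t) \<le> r"
      using gp_cover[OF s(1) assms, of x] xr s(2) by auto
    have "infdist x \<Gamma> \<le> r" using t by (intro infdist_le2[of "gp n t"]) (auto simp: \<Gamma>_def)
    then show "x \<in> nbhd \<Gamma> r" by (simp add: nbhd_def)
  qed
  have "Lambda (nbhd koch_curve r) r \<le> hausdorff1 \<Gamma>"
    unfolding Lambda_def using rc nb by (intro INF_lower) auto
  also have "\<dots> \<le> ennreal (3*pi/2*(4/3)^n)" unfolding \<Gamma>_def by (rule hausdorff1_lip[OF gp_lip])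
  finally show ?thesis .
qed

lemma interval_cover_sum:
  fixes V :: "nat \<Rightarrow> real set"
  assumes ab: "a \<le> b" and cov: "{a..b} \<subseteq> (\<Union>i. V i)" and bV: "\<And>i. bounded (V i)"
  shows "ennreal (b - a) \<le> 2 * (\<Sum>i. ennreal (diameter (V i)))"
proof -
  define I where "I i = (if V i = {} then {} else {(SOME v. v \<in> V i) - diameter (V i) .. (SOME v. v \<in> V i) + diameter (V i)})" for i
  have VI: "V i \<subseteq> I i" for i
  proof (cases "V i = {}")
    case False
    define v where "v = (SOME v. v \<in> V i)"
    have v: "v \<in> V i" using False unfolding v_def by (meson ex_in_conv someI_ex)
    show ?thesis
    proof
      fix x assume "x \<in> V i"
      then have "dist x v \<le> diameter (V i)" using diameter_bounded_bound[OF bV _ v] by blast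
      then show "x \<in> I i" using False by (auto simp: I_def v_def[symmetric] dist_real_def abs_le_iff)
    qed
  qed (simp add: I_def)
  have mI: "emeasure lborel (I i) = ennreal (2 * diameter (V i))" for i
  proof (cases "V i = {}")
    case True
    then show ?thesis by (simp add: I_def)
  next
    case False
    have "0 \<le> diameter (V i)" using diameter_ge_0[OF bV] .
    then show ?thesis using False by (simp add: I_def)
  qed
  have "ennreal (b - a) = emeasure lborel {a..b}" using ab by simp
  also have "\<dots> \<le> emeasure lborel (\<Union>i. I i)"
  proof (rule emeasure_mono)
    show "{a..b} \<subseteq> (\<Union>i. I i)" using cov VI by blast
  qed (auto simp: I_def)
  also have "\<dots> \<le> (\<Sum>i. emeasure lborel (I i))"
    by (rule emeasure_subadditive_countably) (auto simp: I_def)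
  also have "\<dots> = (\<Sum>i. 2 * ennreal (diameter (V i)))"
    using mI diameter_ge_0[OF bV] by (simp add: ennreal_mult)
  also have "\<dots> = 2 * (\<Sum>i. ennreal (diameter (V i)))" by simp
  finally show ?thesis .
qed


lemma lip1_image:
  fixes \<phi> :: "complex \<Rightarrow> real"
  assumes lip: "\<And>x y. \<bar>\<phi> x - \<phi> y\<bar> \<le> dist x y" and b: "bounded S"
  shows "bounded (\<phi> ` S)" "diameter (\<phi> ` S) \<le> diameter S"
proof -
  obtain c R where cR: "S \<subseteq> cball c R" using b bounded_subset_cball by blast
  have "\<phi> ` S \<subseteq> cball (\<phi> c) R"
  proof
    fix y assume "y \<in> \<phi> ` S"
    then obtain x where "x \<in> S" "y = \<phi> x" by blast
    then have "\<bar>\<phi> c - \<phi> x\<bar> \<le> R" using lip[of c x] cR by (auto simp: dist_commute)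
    then show "y \<in> cball (\<phi> c) R" using \<open>y = \<phi> x\<close> by (simp add: dist_real_def)
  qed
  then show "bounded (\<phi> ` S)" using bounded_cball bounded_subset by blast
  show "diameter (\<phi> ` S) \<le> diameter S"
  proof (rule diameter_le)
    show "\<phi> ` S \<noteq> {} \<or> 0 \<le> diameter S" using diameter_ge_0[OF b] by simp
    fix u v assume "u \<in> \<phi> ` S" "v \<in> \<phi> ` S"
    then obtain x y where "x \<in> S" "y \<in> S" "u = \<phi> x" "v = \<phi> y" by blast
    then show "norm (u - v) \<le> diameter S"
      using lip[of x y] diameter_bounded_bound[OF b, of x y] by simp
  qed
qed

lemma proj_lower:
  fixes \<phi> :: "complex \<Rightarrow> real"
  assumes lip: "\<And>x y. \<bar>\<phi> x - \<phi> y\<bar> \<le> dist x y"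
    and cov: "\<Gamma> \<subseteq> (\<Union>i. U i)" and bU: "\<And>i. bounded (U i)"
    and ab: "a \<le> b" and img: "{a..b} \<subseteq> \<phi> ` (\<Gamma> \<inter> A)"
  shows "ennreal (b - a) \<le> 2 * (\<Sum>i. ennreal (diameter (U i \<inter> A)))"
proof -
  define V where "V i = \<phi> ` (U i \<inter> A)" for i
  have bUA: "bounded (U i \<inter> A)" for i using bU bounded_Int by blast
  have "{a..b} \<subseteq> (\<Union>i. V i)"
  proof
    fix t assume "t \<in> {a..b}"
    then obtain z where "z \<in> \<Gamma>" "z \<in> A" "t = \<phi> z" using img by blast
    then obtain i where "z \<in> U i" using cov by blast
    then show "t \<in> (\<Union>i. V i)" using \<open>z \<in> A\<close> \<open>t = \<phi> z\<close> by (auto simp: V_def)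
  qed
  then have "ennreal (b - a) \<le> 2 * (\<Sum>i. ennreal (diameter (V i)))"
    using interval_cover_sum[OF ab] lip1_image(1)[OF lip bUA] by (simp add: V_def)
  also have "\<dots> \<le> 2 * (\<Sum>i. ennreal (diameter (U i \<inter> A)))"
    by (intro mult_left_mono suminf_le ennreal_leI) (auto simp: V_def lip1_image(2)[OF lip bUA])
  finally show ?thesis .
qed


lemma dist_lip1: "\<bar>dist a x - dist a y\<bar> \<le> dist x (y::complex)"
  using dist_triangle[of a x y] dist_triangle[of a y x] by (simp add: dist_commute abs_le_iff)

lemma hausdorff1_geI:
  assumes "\<delta> > 0"
    and "\<And>U. \<Gamma> \<subseteq> (\<Union>i. U i) \<Longrightarrow> (\<And>i. bounded (U i)) \<Longrightarrow> (\<And>i. diameter (U i) \<le> \<delta>)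
          \<Longrightarrow> c \<le> (\<Sum>i. ennreal (diameter (U i)))"
  shows "c \<le> hausdorff1 \<Gamma>"
  unfolding hausdorff1_def
proof (rule SUP_upper2[of \<delta>])
  show "\<delta> \<in> {0<..}" using assms(1) by simp
  show "c \<le> (INF U\<in>{U. \<Gamma> \<subseteq> (\<Union>i. U i) \<and> (\<forall>i. bounded (U i) \<and> diameter (U i) \<le> \<delta>)}.
             \<Sum>i. ennreal (diameter (U i)))"
    by (rule INF_greatest) (use assms(2) in auto)
qed

lemma lower_main:
  fixes p :: "'w \<Rightarrow> complex" and \<rho> :: real
  assumes conn: "connected \<Gamma>" and W: "finite W" "card W \<ge> 2" and p\<Gamma>: "\<And>w. w \<in> W \<Longrightarrow> p w \<in> \<Gamma>"
    and sep: "\<And>w w'. w \<in> W \<Longrightarrow> w' \<in> W \<Longrightarrow> w \<noteq> w' \<Longrightarrow> 4*\<rho> \<le> dist (p w) (p w')"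
    and \<rho>: "\<rho> > 0"
  shows "ennreal (real (card W) * \<rho> / 2) \<le> hausdorff1 \<Gamma>"
proof (rule hausdorff1_geI[OF \<rho>])
  fix U :: "nat \<Rightarrow> complex set" assume cov: "\<Gamma> \<subseteq> (\<Union>i. U i)" and bU: "\<And>i. bounded (U i)" and dU: "\<And>i. diameter (U i) \<le> \<rho>"
  define B where "B w = cball (p w) \<rho>" for w
  have each: "ennreal \<rho> \<le> 2 * (\<Sum>i. ennreal (diameter (U i \<inter> B w)))" if w: "w \<in> W" for w
  proof -
    have "\<exists>w'\<in>W. w' \<noteq> w"
    proof (rule ccontr)
      assume "\<not> ?thesis"
      then have "W \<subseteq> {w}" by blast
      then have "card W \<le> 1" using card_mono[of "{w}" W] by (simp add: card_mono)
      with W(2) show False by simp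
    qed
    then obtain w' where w': "w' \<in> W" "w' \<noteq> w" by blast
    have cc: "connected ((\<lambda>z. dist (p w) z) ` \<Gamma>)"
      by (rule connected_continuous_image[OF _ conn]) (intro continuous_intros)
    have "0 \<in> (\<lambda>z. dist (p w) z) ` \<Gamma>" using p\<Gamma>[OF w] by force
    moreover have "dist (p w) (p w') \<in> (\<lambda>z. dist (p w) z) ` \<Gamma>" using p\<Gamma>[OF w'(1)] by blast
    ultimately have I: "{0..dist (p w) (p w')} \<subseteq> (\<lambda>z. dist (p w) z) ` \<Gamma>"
      using connected_contains_Icc[OF cc] by blast
    have "4*\<rho> \<le> dist (p w) (p w')" using sep[OF w w'(1)] w'(2) by auto
    have img: "{0..\<rho>} \<subseteq> (\<lambda>z. dist (p w) z) ` (\<Gamma> \<inter> B w)"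
    proof
      fix t assume t: "t \<in> {0..\<rho>}"
      then have "t \<in> {0..dist (p w) (p w')}" using \<open>4*\<rho> \<le> dist (p w) (p w')\<close> \<rho> by auto
      then obtain z where "z \<in> \<Gamma>" "t = dist (p w) z" using I by blast
      then show "t \<in> (\<lambda>z. dist (p w) z) ` (\<Gamma> \<inter> B w)" using t by (auto simp: B_def)
    qed
    show ?thesis using proj_lower[OF dist_lip1 cov bU _ img] \<rho> by simp
  qed
  have point: "(\<Sum>w\<in>W. ennreal (diameter (U i \<inter> B w))) \<le> ennreal (diameter (U i))" for i
  proof (cases "\<exists>w0\<in>W. U i \<inter> B w0 \<noteq> {}")
    case True
    then obtain w0 where w0: "w0 \<in> W" "U i \<inter> B w0 \<noteq> {}" by blast
    have other: "U i \<inter> B w = {}" if "w \<in> W" "w \<noteq> w0" for w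
    proof (rule ccontr)
      assume "U i \<inter> B w \<noteq> {}"
      then obtain y where y: "y \<in> U i" "dist (p w) y \<le> \<rho>" by (auto simp: B_def)
      obtain x where x: "x \<in> U i" "dist (p w0) x \<le> \<rho>" using w0(2) by (auto simp: B_def)
      have "dist x y \<le> \<rho>" using diameter_bounded_bound[OF bU x(1) y(1)] dU[of i] by simp
      have "dist (p w0) (p w) \<le> dist (p w0) x + dist x y + dist y (p w)"
        by (meson dist_triangle order.trans add_mono order.refl)
      also have "\<dots> \<le> 3 * \<rho>" using x y \<open>dist x y \<le> \<rho>\<close> by (simp add: dist_commute)
      finally show False using sep[OF w0(1) that(1)] that(2) \<rho> by auto
    qed
    have "(\<Sum>w\<in>W. ennreal (diameter (U i \<inter> B w))) = ennreal (diameter (U i \<inter> B w0)) +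
             (\<Sum>w\<in>W - {w0}. ennreal (diameter (U i \<inter> B w)))"
      using W(1) w0(1) by (rule sum.remove)
    also have "(\<Sum>w\<in>W - {w0}. ennreal (diameter (U i \<inter> B w))) = 0"
      using other by (intro sum.neutral) auto
    also have "ennreal (diameter (U i \<inter> B w0)) + 0 \<le> ennreal (diameter (U i))"
      using diameter_subset[OF _ bU, of "U i \<inter> B w0" i] by (simp add: ennreal_leI)
    finally show ?thesis .
  next
    case False
    then have "(\<Sum>w\<in>W. ennreal (diameter (U i \<inter> B w))) = 0" by (intro sum.neutral) auto
    then show ?thesis by simp
  qed
  have "ennreal (real (card W) * \<rho>) = (\<Sum>w\<in>W. ennreal \<rho>)"
    using \<rho> by (simp add: ennreal_of_nat_eq_real_of_nat ennreal_mult)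
  also have "\<dots> \<le> (\<Sum>w\<in>W. 2 * (\<Sum>i. ennreal (diameter (U i \<inter> B w))))"
    using each by (rule sum_mono)
  also have "\<dots> = 2 * (\<Sum>w\<in>W. \<Sum>i. ennreal (diameter (U i \<inter> B w)))"
    by (simp add: sum_distrib_left)
  also have "(\<Sum>w\<in>W. \<Sum>i. ennreal (diameter (U i \<inter> B w))) = (\<Sum>i. \<Sum>w\<in>W. ennreal (diameter (U i \<inter> B w)))"
    by (rule suminf_sum[symmetric]) simp
  also have "\<dots> \<le> (\<Sum>i. ennreal (diameter (U i)))"
    by (rule suminf_le[OF point]) simp_all
  finally have F: "ennreal (real (card W) * \<rho>) \<le> 2 * (\<Sum>i. ennreal (diameter (U i)))"
    by (simp add: mult_left_mono)
  have X0: "0 \<le> real (card W) * \<rho> / 2" using \<rho> by simp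
  have "ennreal (real (card W) * \<rho>) = ennreal (2 * (real (card W) * \<rho> / 2))" by simp
  also have "\<dots> = ennreal 2 * ennreal (real (card W) * \<rho> / 2)" by (rule ennreal_mult) (use X0 in auto)
  finally have "ennreal (real (card W) * \<rho>) = 2 * ennreal (real (card W) * \<rho> / 2)" by simp
  with F show "ennreal (real (card W) * \<rho> / 2) \<le> (\<Sum>i. ennreal (diameter (U i)))"
    by (simp add: ennreal_mult_le_mult_iff)
qed


lemma lower_re:
  assumes conn: "connected \<Gamma>" and a: "a \<in> \<Gamma>" "Re a \<le> 0" and b: "b \<in> \<Gamma>" "1 \<le> Re b"
  shows "ennreal (1/2) \<le> hausdorff1 \<Gamma>"
proof (rule hausdorff1_geI[of 1])
  fix U :: "nat \<Rightarrow> complex set" assume cov: "\<Gamma> \<subseteq> (\<Union>i. U i)" and bU: "\<And>i. bounded (U i)"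
  have lip: "\<bar>Re x - Re y\<bar> \<le> dist x y" for x y
    using abs_Re_le_cmod[of "x - y"] by (simp add: dist_norm)
  have cc: "connected (Re ` \<Gamma>)" by (rule connected_continuous_image[OF _ conn]) (intro continuous_intros)
  have "{Re a..Re b} \<subseteq> Re ` \<Gamma>" using connected_contains_Icc[OF cc] a b by blast
  then have "{0..1} \<subseteq> Re ` (\<Gamma> \<inter> UNIV)" using a(2) b(2) by auto
  from proj_lower[OF lip cov bU _ this]
  have "ennreal 1 \<le> 2 * (\<Sum>i. ennreal (diameter (U i)))" by simp
  moreover have "ennreal 1 = 2 * ennreal (1/2)" using ennreal_mult[of 2 "1/2"] by simp
  ultimately have "2 * ennreal (1/2) \<le> 2 * (\<Sum>i. ennreal (diameter (U i)))" by simp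
  then show "ennreal (1/2) \<le> (\<Sum>i. ennreal (diameter (U i)))"
    by (subst (asm) ennreal_mult_le_mult_iff) auto
qed simp

definition tri :: "complex set" where
  "tri = {z. 0 \<le> Im z \<and> sqrt 3 * Im z \<le> Re z \<and> sqrt 3 * Im z \<le> 1 - Re z}"

lemma s3: "sqrt 3 * sqrt 3 = (3::real)" by simp

lemma s3x: "sqrt 3 * (sqrt 3 * x) = 3 * (x::real)" by (simp add: mult.assoc[symmetric])

lemma tri_facts:
  assumes "z \<in> tri"
  shows "0 \<le> Im z" "0 \<le> Re z" "Re z \<le> 1" "0 \<le> Im z * sqrt 3" "Re z * sqrt 3 \<le> sqrt 3"
    "0 \<le> Re z * sqrt 3" "Im z * sqrt 3 \<le> Re z" "Re z + Im z * sqrt 3 \<le> 1"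
proof -
  have a: "0 \<le> Im z" "sqrt 3 * Im z \<le> Re z" "sqrt 3 * Im z \<le> 1 - Re z" using assms by (auto simp: tri_def)
  have b: "0 \<le> Im z * sqrt 3" using a(1) by simp
  have c: "Im z * sqrt 3 \<le> Re z" "Im z * sqrt 3 \<le> 1 - Re z" using a by (simp_all add: mult.commute)
  show f: "0 \<le> Im z" "0 \<le> Re z" "Re z \<le> 1" "0 \<le> Im z * sqrt 3" "Im z * sqrt 3 \<le> Re z"
     "Re z + Im z * sqrt 3 \<le> 1"
    using a(1) b c by linarith+
  show "Re z * sqrt 3 \<le> sqrt 3" using f(3) by simp
  show "0 \<le> Re z * sqrt 3" using f(2) by simp
qed

lemma tri_inv: "z \<in> tri \<Longrightarrow> koch_map i z \<in> tri"
proof -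
  assume z: "z \<in> tri"
  define x y where "x = Re z" and "y = Im z"
  have f: "0 \<le> y" "0 \<le> x" "x \<le> 1" "0 \<le> sqrt 3 * y" "sqrt 3 * y \<le> x" "x + sqrt 3 * y \<le> 1"
    "sqrt 3 * x \<le> sqrt 3" "0 \<le> sqrt 3 * x"
    using tri_facts[OF z] unfolding x_def y_def by (simp_all only: mult.commute)
  have "i = 1 \<or> i = 2 \<or> i = 3 \<or> (i \<noteq> 1 \<and> i \<noteq> 2 \<and> i \<noteq> 3)" by blast
  then show ?thesis
  proof (elim disjE conjE)
    assume i: "i = 1"
    have "Re (koch_map i z) = x/3" "sqrt 3 * Im (koch_map i z) = sqrt 3 * y / 3" "Im (koch_map i z) = y/3"
      using i by (simp_all add: km_Re km_Im x_def y_def)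
    note e = this
    show ?thesis unfolding tri_def mem_Collect_eq apply (intro conjI) using e f by linarith+
  next
    assume i: "i = 2"
    have "Re (koch_map i z) = 1/3 + x/6 - sqrt 3 * y / 6" "sqrt 3 * Im (koch_map i z) = x/2 + sqrt 3 * y / 6"
      "Im (koch_map i z) = sqrt 3 * x / 6 + y / 6"
      using i by (simp_all add: km_Re km_Im x_def y_def field_simps)
    note e = this
    show ?thesis unfolding tri_def mem_Collect_eq apply (intro conjI) using e f by linarith+
  next
    assume i: "i = 3"
    have "Re (koch_map i z) = 1/2 + x/6 + sqrt 3 * y / 6" "sqrt 3 * Im (koch_map i z) = 1/2 - x/2 + sqrt 3 * y / 6"
      "Im (koch_map i z) = sqrt 3 / 6 - sqrt 3 * x / 6 + y / 6"
      using i by (simp_all add: km_Re km_Im x_def y_def field_simps)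
    note e = this
    show ?thesis unfolding tri_def mem_Collect_eq apply (intro conjI) using e f by linarith+
  next
    assume i: "i \<noteq> 1" "i \<noteq> 2" "i \<noteq> 3"
    have "Re (koch_map i z) = 2/3 + x/3" "sqrt 3 * Im (koch_map i z) = sqrt 3 * y / 3" "Im (koch_map i z) = y/3"
      using i by (simp_all add: km_Re km_Im x_def y_def)
    note e = this
    show ?thesis unfolding tri_def mem_Collect_eq apply (intro conjI) using e f by linarith+
  qed
qed

lemma norm_le_sq: "0 \<le> c \<Longrightarrow> (Re w)^2 + (Im w)^2 \<le> c^2 \<Longrightarrow> norm w \<le> c"
  unfolding cmod_def by (rule real_le_lsqrt)

lemma norm_ge_sq: "0 \<le> c \<Longrightarrow> c^2 \<le> (Re w)^2 + (Im w)^2 \<Longrightarrow> c \<le> norm w"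
  unfolding cmod_def by (rule real_le_rsqrt)

lemma tri_dists:
  assumes z: "z \<in> tri"
  shows "norm (z - 1) \<le> 2 * (1 - Re z)" "norm (z - 1) \<le> 1 - Re z + sqrt 3 * Im z" "norm z \<le> 2 * Re z"
proof -
  define x y where "x = Re z" and "y = Im z"
  have f: "0 \<le> y" "0 \<le> x" "x \<le> 1" "0 \<le> sqrt 3 * y" "sqrt 3 * y \<le> x" "x + sqrt 3 * y \<le> 1"
    using tri_facts[OF z] unfolding x_def y_def by (simp_all only: mult.commute)
  have sq: "(sqrt 3 * y)^2 = 3 * y^2" by (simp add: power_mult_distrib)
  have a1: "(sqrt 3 * y)^2 \<le> x^2" using f by (intro power_mono) auto
  have a2: "(sqrt 3 * y)^2 \<le> (1 - x)^2" using f by (intro power_mono) auto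
  have p: "0 \<le> (1 - x) * (sqrt 3 * y)" by (rule mult_nonneg_nonneg) (use f in linarith)+
  have e1: "(Re (z - 1))^2 + (Im (z - 1))^2 = (1 - x)^2 + y^2"
    by (simp add: x_def y_def power2_eq_square algebra_simps)
  have q1: "(2*(1-x))^2 = 4*(1-x)^2" "(2*x)^2 = 4*x^2" by (simp_all add: power2_eq_square algebra_simps)
  have q2: "(1 - x + sqrt 3 * y)^2 = (1-x)^2 + 2 * ((1 - x) * (sqrt 3 * y)) + (sqrt 3 * y)^2"
    by (simp add: power2_eq_square algebra_simps)
  have e2: "(Re z)^2 + (Im z)^2 = x^2 + y^2" by (simp add: x_def y_def)
  show "norm (z - 1) \<le> 2 * (1 - Re z)"
  proof (rule norm_le_sq)
    show "0 \<le> 2 * (1 - Re z)" using f by (simp add: x_def)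
    show "(Re (z - 1))^2 + (Im (z - 1))^2 \<le> (2 * (1 - Re z))^2"
      unfolding e1 x_def[symmetric] using q1 a2 sq zero_le_power2[of "1-x"] zero_le_power2[of y] by linarith
  qed
  show "norm (z - 1) \<le> 1 - Re z + sqrt 3 * Im z"
  proof (rule norm_le_sq)
    show "0 \<le> 1 - Re z + sqrt 3 * Im z" using f by (simp add: x_def y_def)
    show "(Re (z - 1))^2 + (Im (z - 1))^2 \<le> (1 - Re z + sqrt 3 * Im z)^2"
      unfolding e1 x_def[symmetric] y_def[symmetric] using q2 p sq zero_le_power2[of y] by linarith
  qed
  show "norm z \<le> 2 * Re z"
  proof (rule norm_le_sq)
    show "0 \<le> 2 * Re z" using f by (simp add: x_def)
    show "(Re z)^2 + (Im z)^2 \<le> (2 * Re z)^2"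
      unfolding e2 x_def[symmetric] y_def[symmetric] using q1 a1 sq zero_le_power2[of x] zero_le_power2[of y] by linarith
  qed
qed

lemma tri_sep:
  assumes z: "z \<in> tri"
  shows "Re (koch_map 1 z) \<le> 1/3" "1/3 \<le> Re (koch_map 2 z)" "Re (koch_map 2 z) \<le> 1/2"
    "1/2 \<le> Re (koch_map 3 z)" "Re (koch_map 3 z) \<le> 2/3" "2/3 \<le> Re (koch_map 4 z)"
    "Re (koch_map 1 z) + norm (koch_map 1 z - 1/3) / 2 \<le> 1/3"
    "Re (koch_map 2 z) + norm (koch_map 2 z - apex) / 2 \<le> 1/2"
    "2/3 + norm (koch_map 4 z - 2/3) / 2 \<le> Re (koch_map 4 z)"
proof -
  define x y where "x = Re z" and "y = Im z"
  have f: "0 \<le> y" "0 \<le> x" "x \<le> 1" "0 \<le> sqrt 3 * y" "sqrt 3 * y \<le> x" "x + sqrt 3 * y \<le> 1"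
    using tri_facts[OF z] unfolding x_def y_def by (simp_all only: mult.commute)
  have r: "Re (koch_map 1 z) = x/3" "Re (koch_map 2 z) = 1/3 + x/6 - sqrt 3 * y / 6"
    "Re (koch_map 3 z) = 1/2 + x/6 + sqrt 3 * y / 6" "Re (koch_map 4 z) = 2/3 + x/3"
    by (simp_all add: km_Re x_def y_def field_simps)
  have d: "norm (z - 1) \<le> 2 * (1 - x)" "norm (z - 1) \<le> 1 - x + sqrt 3 * y" "norm z \<le> 2 * x"
    using tri_dists[OF z] by (simp_all add: x_def y_def)
  have k1: "koch_map 1 1 = 1/3" "koch_map 4 0 = 2/3" by (simp_all add: koch_map_def)
  have n1: "norm (koch_map 1 z - 1/3) = norm (z - 1) / 3"
    using km_dist[of 1 z 1] unfolding k1(1) dist_norm .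
  have n2: "norm (koch_map 2 z - apex) = norm (z - 1) / 3"
    using km_dist[of 2 z 1] unfolding km2_one dist_norm .
  have n4: "norm (koch_map 4 z - 2/3) = norm z / 3"
    using km_dist[of 4 z 0] unfolding k1(2) dist_norm by simp
  show "Re (koch_map 1 z) \<le> 1/3" "1/3 \<le> Re (koch_map 2 z)" "Re (koch_map 2 z) \<le> 1/2"
    "1/2 \<le> Re (koch_map 3 z)" "Re (koch_map 3 z) \<le> 2/3" "2/3 \<le> Re (koch_map 4 z)"
    using r f by linarith+
  show "Re (koch_map 1 z) + norm (koch_map 1 z - 1/3) / 2 \<le> 1/3" using r n1 d f by linarith
  show "Re (koch_map 2 z) + norm (koch_map 2 z - apex) / 2 \<le> 1/2" using r n2 d f by linarith
  show "2/3 + norm (koch_map 4 z - 2/3) / 2 \<le> Re (koch_map 4 z)" using r n4 d f by linarith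
qed


lemma km_n1: "norm (koch_map 1 z - 1/3) = norm (z - 1) / 3"
proof -
  have k: "koch_map 1 1 = 1/3" by (simp add: koch_map_def)
  show ?thesis using km_dist[of 1 z 1] unfolding k dist_norm .
qed

lemma km_n2: "norm (koch_map 2 z - apex) = norm (z - 1) / 3"
  using km_dist[of 2 z 1] unfolding km2_one dist_norm .

lemma km_n4: "norm (koch_map 4 z - 2/3) = norm z / 3"
proof -
  have k: "koch_map 4 0 = 2/3" by (simp add: koch_map_def)
  show ?thesis using km_dist[of 4 z 0] unfolding k dist_norm by simp
qed

lemma km_n1': "norm (koch_map 1 z) = norm z / 3"
proof -
  have k: "koch_map 1 0 = 0" by (simp add: koch_map_def)
  show ?thesis using km_dist[of 1 z 0] unfolding k dist_norm by simp
qed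

lemma km_n4': "norm (koch_map 4 z - 1) = norm (z - 1) / 3"
proof -
  have k: "koch_map 4 1 = 1" by (simp add: koch_map_def)
  show ?thesis using km_dist[of 4 z 1] unfolding k dist_norm .
qed

lemma re_gap: "Re p + g \<le> Re p' \<Longrightarrow> g \<le> norm (p - p')"
  using abs_Re_le_cmod[of "p' - p"] by (simp add: norm_minus_commute)

lemma sep_pair:
  assumes ij: "i \<in> {1..4}" "j \<in> {1..4}" "i < j"
    and z: "z \<in> tri" "e \<le> norm (z - 1)" and z': "z' \<in> tri" "e \<le> norm z'" and e: "e \<le> 1"
  shows "e / 6 \<le> norm (koch_map i z - koch_map j z')"
proof -
  note A = tri_sep[OF z(1)] and B = tri_sep[OF z'(1)]
  have "(i = 1 \<and> j = 2) \<or> (i = 1 \<and> j = 3) \<or> (i = 1 \<and> j = 4) \<or> (i = 2 \<and> j = 3) \<or>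
        (i = 2 \<and> j = 4) \<or> (i = 3 \<and> j = 4)" using ij by auto
  then have "Re (koch_map i z) + e/6 \<le> Re (koch_map j z')"
  proof (elim disjE conjE)
    assume "i = 1" "j = 2" then show ?thesis using A(7) B(2) km_n1[of z] z(2) by simp
  next
    assume "i = 1" "j = 3" then show ?thesis using A(1) B(4) e by simp
  next
    assume "i = 1" "j = 4" then show ?thesis using A(1) B(6) e by simp
  next
    assume "i = 2" "j = 3" then show ?thesis using A(8) B(4) km_n2[of z] z(2) by simp
  next
    assume "i = 2" "j = 4" then show ?thesis using A(3) B(6) e by simp
  next
    assume "i = 3" "j = 4" then show ?thesis using A(5) B(9) km_n4[of z'] z'(2) by simp
  qed
  then show ?thesis by (rule re_gap)
qed


primrec wmap :: "nat list \<Rightarrow> complex \<Rightarrow> complex" where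
  "wmap [] z = z"
| "wmap (i # w) z = koch_map i (wmap w z)"

definition words :: "nat \<Rightarrow> nat list set" where
  "words m = {w. set w \<subseteq> {1..4} \<and> length w = m}"

lemma words_card: "finite (words m) \<and> card (words m) = 4 ^ m"
proof -
  have "card (words m) = card {1..4::nat} ^ m" unfolding words_def by (rule card_lists_length_eq) simp
  moreover have "finite (words m)" unfolding words_def by (rule finite_lists_length_eq) simp
  ultimately show ?thesis by simp
qed

lemma words_Suc: "w \<in> words (Suc m) \<Longrightarrow> \<exists>i u. w = i # u \<and> i \<in> {1..4} \<and> u \<in> words m"
  unfolding words_def by (cases w) auto

lemma wmap_koch: "set w \<subseteq> {1..4} \<Longrightarrow> z \<in> koch_curve \<Longrightarrow> wmap w z \<in> koch_curve"
  by (induction w) (auto intro: koch_sub)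

lemma apex_tri: "apex \<in> tri"
  by (simp add: apex_def tri_def)

lemma apex_norms: "1/2 \<le> norm apex" "1/2 \<le> norm (apex - 1)"
  by (rule norm_ge_sq; simp add: apex_def power2_eq_square)+

lemma words_sep:
  "(\<forall>w\<in>words m. wmap w apex \<in> tri \<and> (1/2)*(1/3)^m \<le> norm (wmap w apex)
        \<and> (1/2)*(1/3)^m \<le> norm (wmap w apex - 1)) \<and>
   (\<forall>w\<in>words m. \<forall>w'\<in>words m. w \<noteq> w' \<longrightarrow> (1/4)*(1/3)^m \<le> norm (wmap w apex - wmap w' apex))"
proof (induction m)
  case 0
  then show ?case using apex_tri apex_norms by (auto simp: words_def)
next
  case (Suc m)
  define e :: real where "e = (1/2)*(1/3)^m"
  have "(1/3::real)^m \<le> 1" by (rule power_le_one) auto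
  then have e1: "e \<le> 1" "0 \<le> e" by (simp_all add: e_def)
  have P: "wmap u apex \<in> tri" "e \<le> norm (wmap u apex)" "e \<le> norm (wmap u apex - 1)"
    if "u \<in> words m" for u using Suc.IH that by (auto simp: e_def)
  have part1: "wmap w apex \<in> tri \<and> (1/2)*(1/3)^Suc m \<le> norm (wmap w apex)
        \<and> (1/2)*(1/3)^Suc m \<le> norm (wmap w apex - 1)" if w: "w \<in> words (Suc m)" for w
  proof -
    obtain i u where iu: "w = i # u" "i \<in> {1..4}" "u \<in> words m" using words_Suc[OF w] by blast
    note Pu = P[OF iu(3)]
    have t: "koch_map i (wmap u apex) \<in> tri" using tri_inv Pu(1) by blast
    have n0: "e / 3 \<le> norm (koch_map i (wmap u apex))"
    proof (cases "i = 1")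
      case True then show ?thesis using km_n1' Pu(2) by simp
    next
      case False
      then have "1/3 \<le> Re (koch_map i (wmap u apex))"
        using iu(2) tri_sep[OF Pu(1)] by (auto simp: atLeastAtMost_iff le_Suc_eq numeral_eq_Suc)
      then show ?thesis using abs_Re_le_cmod[of "koch_map i (wmap u apex)"] e1 by linarith
    qed
    have n1: "e / 3 \<le> norm (koch_map i (wmap u apex) - 1)"
    proof (cases "i = 4")
      case True then show ?thesis using km_n4' Pu(3) by simp
    next
      case False
      then have "Re (koch_map i (wmap u apex)) \<le> 2/3"
        using iu(2) tri_sep[OF Pu(1)] by (auto simp: atLeastAtMost_iff le_Suc_eq numeral_eq_Suc)
      then show ?thesis using abs_Re_le_cmod[of "koch_map i (wmap u apex) - 1"] e1 by simp
    qed
    show ?thesis using t n0 n1 iu(1) by (simp add: e_def)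
  qed
  have part2: "(1/4)*(1/3)^Suc m \<le> norm (wmap w apex - wmap w' apex)"
    if w: "w \<in> words (Suc m)" and w': "w' \<in> words (Suc m)" and ne: "w \<noteq> w'" for w w'
  proof -
    obtain i u where iu: "w = i # u" "i \<in> {1..4}" "u \<in> words m" using words_Suc[OF w] by blast
    obtain j u' where ju: "w' = j # u'" "j \<in> {1..4}" "u' \<in> words m" using words_Suc[OF w'] by blast
    have goal: "e / 6 \<le> norm (koch_map i (wmap u apex) - koch_map j (wmap u' apex))"
    proof (cases "i = j")
      case True
      then have "u \<noteq> u'" using ne iu(1) ju(1) by simp
      then have "(1/4)*(1/3)^m \<le> norm (wmap u apex - wmap u' apex)" using Suc.IH iu(3) ju(3) by blast
      then show ?thesis using km_dist[of i "wmap u apex" "wmap u' apex"] True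
        by (simp add: dist_norm e_def)
    next
      case False
      show ?thesis
      proof (cases "i < j")
        case True
        show ?thesis by (rule sep_pair[OF iu(2) ju(2) True P(1,3)[OF iu(3)] P(1,2)[OF ju(3)] e1(1)])
      next
        case False2: False
        then have "j < i" using False by simp
        from sep_pair[OF ju(2) iu(2) this P(1,3)[OF ju(3)] P(1,2)[OF iu(3)] e1(1)]
        show ?thesis by (simp add: norm_minus_commute)
      qed
    qed
    then show ?thesis using iu(1) ju(1) by (simp add: e_def)
  qed
  show ?case using part1 part2 by blast
qed


lemma rc_props:
  assumes "rectifiable_curve \<Gamma>"
  shows "compact \<Gamma>" "connected \<Gamma>" "\<Gamma> \<noteq> {}"
proof -
  obtain g :: "real \<Rightarrow> complex" and L where g: "lipschitz_on L {0..1} g" "\<Gamma> = g ` {0..1}"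
    using assms unfolding rectifiable_curve_def by blast
  have c: "continuous_on {0..1} g" using lipschitz_on_continuous_on[OF g(1)] .
  show "compact \<Gamma>" using g(2) compact_continuous_image[OF c] by simp
  show "connected \<Gamma>" using g(2) connected_continuous_image[OF c] by simp
  show "\<Gamma> \<noteq> {}" using g(2) by simp
qed

lemma near_point:
  assumes "rectifiable_curve \<Gamma>" "nbhd koch_curve r \<subseteq> nbhd \<Gamma> r" "infdist x koch_curve \<le> r"
  shows "\<exists>y\<in>\<Gamma>. dist x y \<le> r"
proof -
  have "x \<in> nbhd \<Gamma> r" using assms(2,3) by (auto simp: nbhd_def)
  then have "infdist x \<Gamma> \<le> r" by (simp add: nbhd_def)
  moreover obtain y where "y \<in> \<Gamma>" "infdist x \<Gamma> = dist x y"
    using infdist_attained[OF compact_imp_closed[OF rc_props(1)[OF assms(1)]] rc_props(3)[OF assms(1)]] by metis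
  ultimately show ?thesis by auto
qed

lemma Lambda_lower_big:
  assumes r: "0 < r"
  shows "ennreal (1/2) \<le> Lambda (nbhd koch_curve r) r"
  unfolding Lambda_def
proof (rule INF_greatest, clarify)
  fix \<Gamma> assume rc: "rectifiable_curve \<Gamma>" and nb: "nbhd koch_curve r \<subseteq> nbhd \<Gamma> r"
  have "infdist (- complex_of_real r) koch_curve \<le> r"
    using infdist_le[OF zero_in_koch, of "- complex_of_real r"] r by (simp add: dist_norm)
  then obtain a where a: "a \<in> \<Gamma>" "dist (- complex_of_real r) a \<le> r" using near_point[OF rc nb] by blast
  have "infdist (1 + complex_of_real r) koch_curve \<le> r"
    using infdist_le[OF one_in_koch, of "1 + complex_of_real r"] r by (simp add: dist_norm)
  then obtain b where b: "b \<in> \<Gamma>" "dist (1 + complex_of_real r) b \<le> r" using near_point[OF rc nb] by blast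
  have "Re a \<le> 0"
  proof -
    have "\<bar>Re (a + complex_of_real r)\<bar> \<le> r"
      using abs_Re_le_cmod[of "a + complex_of_real r"] a(2) by (simp add: dist_norm norm_minus_commute add.commute)
    then show ?thesis by simp
  qed
  moreover have "1 \<le> Re b"
  proof -
    have "\<bar>Re (1 + complex_of_real r - b)\<bar> \<le> r"
      using abs_Re_le_cmod[of "1 + complex_of_real r - b"] b(2) by (simp add: dist_norm)
    then show ?thesis by simp
  qed
  ultimately show "ennreal (1/2) \<le> hausdorff1 \<Gamma>"
    using lower_re[OF rc_props(2)[OF rc] a(1) _ b(1)] by simp
qed

lemma Lambda_lower_m:
  assumes r: "0 < r" and m: "1 \<le> m" and rm: "24 * r * 3^m \<le> 1"
  shows "ennreal (4^m * r / 2) \<le> Lambda (nbhd koch_curve r) r"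
  unfolding Lambda_def
proof (rule INF_greatest, clarify)
  fix \<Gamma> assume rc: "rectifiable_curve \<Gamma>" and nb: "nbhd koch_curve r \<subseteq> nbhd \<Gamma> r"
  define W where "W = words m"
  define q where "q w = wmap w apex" for w
  have qK: "q w \<in> koch_curve" if "w \<in> W" for w
    using that wmap_koch[OF _ apex_in_koch] by (auto simp: W_def words_def q_def)
  have "\<forall>w\<in>W. \<exists>y\<in>\<Gamma>. dist (q w) y \<le> r"
    using near_point[OF rc nb] qK r by (simp add: less_imp_le)
  then obtain p where p: "\<And>w. w \<in> W \<Longrightarrow> p w \<in> \<Gamma> \<and> dist (q w) (p w) \<le> r" by metis
  have r6: "6 * r \<le> (1/4) * (1/3)^m"
    using rm by (simp add: power_one_over field_simps)
  have sep: "4 * r \<le> dist (p w) (p w')" if "w \<in> W" "w' \<in> W" "w \<noteq> w'" for w w'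
  proof -
    have "(1/4)*(1/3)^m \<le> norm (q w - q w')"
      using words_sep[of m] that by (simp add: W_def q_def)
    then have "6 * r \<le> dist (q w) (q w')" using r6 by (simp add: dist_norm)
    moreover have "dist (q w) (q w') \<le> dist (q w) (p w) + dist (p w) (p w') + dist (p w') (q w')"
      by (meson dist_triangle order.trans add_mono order.refl)
    ultimately show ?thesis using p[OF that(1)] p[OF that(2)] by (simp add: dist_commute)
  qed
  have cW: "finite W" "card W = 4^m" using words_card[of m] by (simp_all add: W_def)
  have "(4::nat) ^ 1 \<le> 4 ^ m" using m by (intro power_increasing) auto
  then have c2: "2 \<le> card W" using cW by simp
  from lower_main[OF rc_props(2)[OF rc] cW(1) c2, of p r] p sep r
  have "ennreal (real (card W) * r / 2) \<le> hausdorff1 \<Gamma>" by auto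
  moreover have "4^m * r / 2 \<le> real (card W) * r / 2" using cW r by simp
  ultimately show "ennreal (4^m * r / 2) \<le> hausdorff1 \<Gamma>"
    by (meson ennreal_leI order.trans)
qed

lemma pow_exp: "(0::real) < a \<Longrightarrow> a ^ n = exp (real n * ln a)"
  by (simp add: exp_of_nat_mult)

lemma upper_num:
  fixes r :: real
  assumes r: "0 < r" "r < 1"
  defines "d \<equiv> ln 4 / ln 3"
  shows "\<exists>n. (1/3)^n \<le> r \<and> (4/3)^n \<le> (4/3) * r powr (1 - d)"
proof -
  define u where "u = - ln r"
  have u: "0 < u" using r by (simp add: u_def)
  have l3: "0 < ln (3::real)" by simp
  have l43: "ln (3::real) < ln 4" by simp
  define n where "n = nat \<lceil>u / ln 3\<rceil>"
  have n1: "u / ln 3 \<le> real n" unfolding n_def by linarith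
  have "0 < u / ln 3" using u l3 by simp
  then have n2: "real n \<le> u / ln 3 + 1" unfolding n_def using of_int_ceiling_le_add_one[of "u / ln 3"] by linarith
  have "(1/3::real)^n = exp (real n * ln (1/3))" by (rule pow_exp) simp
  also have "\<dots> = exp (- (real n * ln 3))" by (simp add: ln_div)
  also have "\<dots> \<le> exp (- u)" using n1 l3 by (simp add: field_simps)
  also have "exp (- u) = r" using r by (simp add: u_def)
  finally have A: "(1/3)^n \<le> r" .
  have "(4/3::real)^n = exp (real n * (ln 4 - ln 3))" by (subst pow_exp) (simp_all add: ln_div)
  also have "\<dots> \<le> exp ((u / ln 3 + 1) * (ln 4 - ln 3))"
    using n2 l43 by (intro exp_mono mult_right_mono) auto
  also have "(u / ln 3 + 1) * (ln 4 - ln 3) = (ln 4 - ln 3) + (1 - d) * ln r"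
    using l3 by (simp add: d_def u_def field_simps)
  also have "exp ((ln 4 - ln 3) + (1 - d) * ln r) = (4/3) * r powr (1 - d)"
    using r by (simp add: exp_add exp_diff powr_def ln_div mult.commute)
  finally show ?thesis using A by blast
qed

lemma lower_num:
  fixes r :: real
  assumes r: "0 < r" "r \<le> 1/72"
  defines "d \<equiv> ln 4 / ln 3"
  shows "\<exists>m::nat. 1 \<le> m \<and> 24 * r * 3^m \<le> 1 \<and> r powr (1 - d) / exp (d * ln 72) \<le> 4^m * r"
proof -
  define u where "u = - ln r"
  have l3: "0 < ln (3::real)" by simp
  have l72: "ln (72::real) = ln 24 + ln 3" using ln_mult[of 24 3] by simp
  have "ln r \<le> ln (1/72)" using r by simp
  then have u72: "ln 72 \<le> u" by (simp add: u_def ln_div)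
  define t where "t = (u - ln 24) / ln 3"
  have t1: "1 \<le> t" using u72 l3 l72 by (simp add: t_def field_simps)
  define m where "m = nat \<lfloor>t\<rfloor>"
  have m1: "real m \<le> t" "t - 1 \<le> real m" using t1 unfolding m_def by linarith+
  have "1 \<le> m" using t1 unfolding m_def by linarith
  moreover have "24 * r * 3^m \<le> 1"
  proof -
    have "(3::real)^m = exp (real m * ln 3)" by (rule pow_exp) simp
    also have "\<dots> \<le> exp (u - ln 24)" using m1(1) l3 by (simp add: t_def field_simps)
    also have "\<dots> = 1 / (24 * r)" using r by (simp add: exp_diff u_def exp_minus field_simps)
    finally show ?thesis using r by (simp add: field_simps)
  qed
  moreover have "r powr (1 - d) / exp (d * ln 72) \<le> 4^m * r"
  proof -
    have "r powr (1 - d) / exp (d * ln 72) = exp ((1 - d) * ln r - d * ln 72)"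
      using r by (simp add: powr_def exp_diff)
    also have "(1 - d) * ln r - d * ln 72 = (t - 1) * ln 4 - u"
      using l3 l72 by (simp add: d_def t_def u_def field_simps)
    also have "exp ((t - 1) * ln 4 - u) \<le> exp (real m * ln 4 - u)"
      using m1(2) by (simp add: mult_right_mono)
    also have "exp (real m * ln 4 - u) = 4^m * r"
      using r by (simp add: exp_diff u_def pow_exp exp_add)
    finally show ?thesis .
  qed
  ultimately show ?thesis by blast
qed

lemma large_num:
  fixes r :: real
  assumes r: "1/72 < r" "r < 1"
  defines "d \<equiv> ln 4 / ln 3"
  shows "r powr (1 - d) \<le> exp (d * ln 72)"
proof -
  have l3: "0 < ln (3::real)" by simp
  have "ln (3::real) < ln 4" by simp
  then have d1: "1 < d" unfolding d_def using l3 by simp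
  have r0: "0 < r" using r by simp
  have "ln (1/72) < ln r" using r r0 by (subst ln_less_cancel_iff) auto
  then have a: "- ln 72 \<le> ln r" by (simp add: ln_div)
  have "r powr (1 - d) = exp ((1 - d) * ln r)" using r0 by (simp add: powr_def)
  also have "(1 - d) * ln r \<le> (1 - d) * (- ln 72)"
    by (rule mult_left_mono_neg[OF a]) (use d1 in simp)
  also have "(1 - d) * (- ln 72) \<le> d * ln 72" by (simp add: algebra_simps)
  finally show ?thesis by simp
qed


theorem corollary3p6:
  fixes \<alpha> :: real
  defines "\<alpha> \<equiv> log 4 3"
  shows "\<exists>C::real. C > 1 \<and> (\<forall>r::real. 0 < r \<and> r < 1 \<longrightarrow>
           ennreal ((1 / C) * r powr ((\<alpha> - 1) / \<alpha>)) \<le> Lambda (nbhd koch_curve r) r \<and>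
           Lambda (nbhd koch_curve r) r \<le> ennreal (C * r powr ((\<alpha> - 1) / \<alpha>)))"
proof -
  define d where "d = ln 4 / ln (3::real)"
  have l3: "0 < ln (3::real)" "0 < ln (4::real)" by simp_all
  have e: "(\<alpha> - 1) / \<alpha> = 1 - d"
    using l3 by (simp add: \<alpha>_def d_def log_def field_simps)
  define K where "K = exp (d * ln 72)"
  have K0: "0 < K" by (simp add: K_def)
  define C where "C = max 8 (2 * K)"
  have C: "1 < C" "8 \<le> C" "2 * K \<le> C" by (auto simp: C_def)
  have main: "ennreal ((1 / C) * r powr (1 - d)) \<le> Lambda (nbhd koch_curve r) r \<and>
           Lambda (nbhd koch_curve r) r \<le> ennreal (C * r powr (1 - d))" if r: "0 < r" "r < 1" for r
  proof
    define P where "P = r powr (1 - d)"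
    have P0: "0 < P" using r by (simp add: P_def)
    obtain n where n: "(1/3)^n \<le> r" "(4/3)^n \<le> (4/3) * P"
      using upper_num[OF r] unfolding P_def d_def by blast
    have "Lambda (nbhd koch_curve r) r \<le> ennreal (3*pi/2*(4/3)^n)" by (rule Lambda_upper_n[OF n(1)])
    also have "3*pi/2*(4/3)^n \<le> 3*pi/2 * ((4/3) * P)" using n(2) by (intro mult_left_mono) auto
    then have "ennreal (3*pi/2*(4/3)^n) \<le> ennreal (C * P)"
    proof -
      have "3*pi/2 * ((4/3) * P) = 2 * pi * P" by simp
      also have "\<dots> \<le> 8 * P" using pi_less_4 P0 by (intro mult_right_mono) auto
      also have "\<dots> \<le> C * P" using C P0 by (intro mult_right_mono) auto
      finally show ?thesis using \<open>3*pi/2*(4/3)^n \<le> 3*pi/2 * ((4/3) * P)\<close> by (intro ennreal_leI) linarith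
    qed
    finally show "Lambda (nbhd koch_curve r) r \<le> ennreal (C * r powr (1 - d))" by (simp add: P_def)
    show "ennreal ((1 / C) * r powr (1 - d)) \<le> Lambda (nbhd koch_curve r) r"
    proof (cases "r \<le> 1/72")
      case True
      obtain m :: nat where m: "1 \<le> m" "24 * r * 3^m \<le> 1" "P / K \<le> 4^m * r"
        using lower_num[OF r(1) True] unfolding P_def K_def d_def by blast
      have "(1 / C) * P \<le> P / (2 * K)" using C P0 K0 by (simp add: field_simps mult_left_mono)
      also have "\<dots> \<le> 4^m * r / 2" using m(3) by simp
      finally have "ennreal ((1 / C) * P) \<le> ennreal (4^m * r / 2)" by (rule ennreal_leI)
      also have "\<dots> \<le> Lambda (nbhd koch_curve r) r" by (rule Lambda_lower_m[OF r(1) m(1,2)])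
      finally show ?thesis by (simp add: P_def)
    next
      case False
      have "P \<le> K" using large_num[of r] False r unfolding P_def K_def d_def by simp
      then have "(1 / C) * P \<le> 1/2" using C K0 P0 by (simp add: field_simps)
      then have "ennreal ((1 / C) * P) \<le> ennreal (1/2)" by (rule ennreal_leI)
      also have "\<dots> \<le> Lambda (nbhd koch_curve r) r" by (rule Lambda_lower_big[OF r(1)])
      finally show ?thesis by (simp add: P_def)
    qed
  qed
  show ?thesis unfolding e using C(1) main by blast
qed

end
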